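(* Let $k$ be an odd positive integer. Then $\Bbbk_{-1}[u,v]^{G_{2,k}}\cong\Bbbk[u,v]^{\frac1{4k}(1,2k+1)}$; in particular it is a commutative cyclic quotient singularity.
   Context: $\Bbbk$ is algebraically closed of characteristic $0$; $\Bbbk_{-1}[u,v]=\Bbbk\langle u,v\rangle/(vu+uv)$; matrices $\begin{pmatrix}a&b\\c&d\end{pmatrix}$ act by $u\mapsto au+cv$, $v\mapsto bu+dv$. $G_{n,k}$ is generated by $\mathrm{diag}(\omega^{2k},\omega^{-2k})$ and $\begin{pmatrix}0&\omega^n\\\omega^n&0\end{pmatrix}$ for $\omega$ a primitive $(2nk)$th root of unity. $\frac1m(1,b)$ is the cyclic group generated by $\mathrm{diag}(\omega_m,\omega_m^b)$ acting on the commutative polynomial ring $\Bbbk[u,v]$. *)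

theory Defs
  imports "HOL-Library.Poly_Mapping" "HOL-Computational_Algebra.Polynomial"
begin

text \<open>Elements of the quantum plane k_q[u,v] (vu = q uv), for q = 1 (commutative
  polynomial ring k[u,v]) or q = -1 (skew ring k_{-1}[u,v]).  An element is a
  finitely supported coefficient function on the PBW basis u^i v^j, indexed by (i,j).\<close>

type_synonym 'k qpoly = "(nat \<times> nat) \<Rightarrow>\<^sub>0 'k"

definition qmonom :: "'k::zero \<Rightarrow> nat \<Rightarrow> nat \<Rightarrow> 'k qpoly" where
  "qmonom c i j = Poly_Mapping.single (i, j) c"

definition qmult :: "'k::comm_ring_1 \<Rightarrow> 'k qpoly \<Rightarrow> 'k qpoly \<Rightarrow> 'k qpoly" where
  "qmult q p r = (\<Sum>(i,j)\<in>Poly_Mapping.keys p. \<Sum>(a,b)\<in>Poly_Mapping.keys r.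
      qmonom (q ^ (j * a) * Poly_Mapping.lookup p (i,j) * Poly_Mapping.lookup r (a,b)) (i + a) (j + b))"

definition qone :: "'k::comm_ring_1 qpoly" where
  "qone = qmonom 1 0 0"

definition qscale :: "'k::comm_ring_1 \<Rightarrow> 'k qpoly \<Rightarrow> 'k qpoly" where
  "qscale c p = Poly_Mapping.map (\<lambda>x. c * x) p"

fun qpow :: "'k::comm_ring_1 \<Rightarrow> 'k qpoly \<Rightarrow> nat \<Rightarrow> 'k qpoly" where
  "qpow q p 0 = qone"
| "qpow q p (Suc n) = qmult q (qpow q p n) p"

text \<open>2x2 matrices ((a,b),(c,d)) encoded as (a,b,c,d).\<close>
type_synonym 'k mat2 = "'k \<times> 'k \<times> 'k \<times> 'k"

fun mat2_mult :: "'k::comm_ring_1 mat2 \<Rightarrow> 'k mat2 \<Rightarrow> 'k mat2" where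
  "mat2_mult (a,b,c,d) (a',b',c',d') =
     (a*a' + b*c', a*b' + b*d', c*a' + d*c', c*b' + d*d')"

definition mat2_id :: "'k::comm_ring_1 mat2" where
  "mat2_id = (1, 0, 0, 1)"

text \<open>The matrix (a,b,c,d) acts by u \<mapsto> a u + c v, v \<mapsto> b u + d v, extended
  multiplicatively (u^i v^j \<mapsto> (au+cv)^i (bu+dv)^j) and linearly.\<close>
fun mat2_act :: "'k::comm_ring_1 \<Rightarrow> 'k mat2 \<Rightarrow> 'k qpoly \<Rightarrow> 'k qpoly" where
  "mat2_act q (a,b,c,d) p =
     (\<Sum>(i,j)\<in>Poly_Mapping.keys p. qscale (Poly_Mapping.lookup p (i,j))
        (qmult q (qpow q (qmonom a 1 0 + qmonom c 0 1) i)
                 (qpow q (qmonom b 1 0 + qmonom d 0 1) j)))"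

text \<open>The (finite) group generated by a set of matrices: closure under products.\<close>
inductive_set gen_group :: "'k::comm_ring_1 mat2 set \<Rightarrow> 'k mat2 set" for S where
  gen_id: "mat2_id \<in> gen_group S"
| gen_step: "M \<in> S \<Longrightarrow> g \<in> gen_group S \<Longrightarrow> mat2_mult M g \<in> gen_group S"

definition invariants :: "'k::comm_ring_1 \<Rightarrow> 'k mat2 set \<Rightarrow> 'k qpoly set" where
  "invariants q G = {p. \<forall>M\<in>G. mat2_act q M p = p}"

definition primitive_root :: "'k::comm_ring_1 \<Rightarrow> nat \<Rightarrow> bool" where
  "primitive_root w m \<longleftrightarrow> 0 < m \<and> w ^ m = 1 \<and> (\<forall>r. 0 < r \<and> r < m \<longrightarrow> w ^ r \<noteq> 1)"

text \<open>G_{n,k} with respect to a primitive (2nk)-th root of unity w.\<close>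
definition G_nk :: "nat \<Rightarrow> nat \<Rightarrow> 'k::field \<Rightarrow> 'k mat2 set" where
  "G_nk n k w = gen_group {(w ^ (2*k), 0, 0, inverse (w ^ (2*k))), (0, w ^ n, w ^ n, 0)}"

text \<open>The cyclic group (1/m)(1,b) with respect to a primitive m-th root of unity w.\<close>
definition cyclic_grp :: "nat \<Rightarrow> nat \<Rightarrow> 'k::field \<Rightarrow> 'k mat2 set" where
  "cyclic_grp m b w = gen_group {(w, 0, 0, w ^ b)}"

definition qalg_iso :: "'k::comm_ring_1 \<Rightarrow> 'k qpoly set \<Rightarrow> 'k \<Rightarrow> 'k qpoly set \<Rightarrow> bool" where
  "qalg_iso p A q B \<longleftrightarrow> (\<exists>f. bij_betw f A B \<and> f qone = qone \<and>
     (\<forall>x\<in>A. \<forall>y\<in>A. f (x + y) = f x + f y \<and> f (qmult p x y) = qmult q (f x) (f y)) \<and>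
     (\<forall>c. \<forall>x\<in>A. f (qscale c x) = qscale c (f x)))"

end

theory Submission
  imports Defs "HOL-Library.Product_Plus"
begin

lemma qmonom_single: "qmonom c i j = Poly_Mapping.single (i,j) c"
  by (simp add: qmonom_def)

lemma lookup_sum_single:
  assumes "finite K"
  shows "Poly_Mapping.lookup (\<Sum>x\<in>K. Poly_Mapping.single (s x) (f x)) y = (\<Sum>x\<in>{x\<in>K. s x = y}. f x)"
proof -
  have "Poly_Mapping.lookup (\<Sum>x\<in>K. Poly_Mapping.single (s x) (f x)) y
      = (\<Sum>x\<in>K. if s x = y then f x else 0)"
    by (simp add: lookup_sum lookup_single when_def)
  also have "\<dots> = (\<Sum>x\<in>{x\<in>K. s x = y}. f x)"
    using assms by (simp add: sum.inter_filter[symmetric])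
  finally show ?thesis .
qed

lemma lookup_sum_single_id:
  assumes "finite K"
  shows "Poly_Mapping.lookup (\<Sum>x\<in>K. Poly_Mapping.single x (f x)) y = (if y \<in> K then f y else 0)"
proof -
  have "{x\<in>K. x = y} = (if y \<in> K then {y} else {})" by auto
  then show ?thesis using assms by (simp add: lookup_sum_single)
qed

lemma lookup_sum_single_swap:
  assumes "finite K"
  shows "Poly_Mapping.lookup (\<Sum>x\<in>K. Poly_Mapping.single (snd x, fst x) (f x)) (i,j)
      = (if (j,i) \<in> K then f (j,i) else 0)"
proof -
  have "{x\<in>K. (snd x, fst x) = (i,j)} = (if (j,i) \<in> K then {(j,i)} else {})" by auto
  then show ?thesis using assms by (simp add: lookup_sum_single)
qed

lemma pm_sum_keys: "(p::'a \<Rightarrow>\<^sub>0 'b::comm_monoid_add) = (\<Sum>x\<in>Poly_Mapping.keys p. Poly_Mapping.single x (Poly_Mapping.lookup p x))"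
  by (rule poly_mapping_eqI) (simp add: lookup_sum_single_id in_keys_iff)

lemma qmult_single:
  "qmult q (Poly_Mapping.single x c) (Poly_Mapping.single y d)
     = Poly_Mapping.single (x+y) (q ^ (snd x * fst y) * c * d)"
  by (cases x; cases y; cases "c = 0"; cases "d = 0") (simp_all add: qmult_def qmonom_def)

lemma qmult_1: "qmult 1 p r = p * r"
proof -
  have "p * r = (\<Sum>x\<in>Poly_Mapping.keys p. Poly_Mapping.single x (Poly_Mapping.lookup p x))
      * (\<Sum>y\<in>Poly_Mapping.keys r. Poly_Mapping.single y (Poly_Mapping.lookup r y))"
    using pm_sum_keys[of p] pm_sum_keys[of r] by simp
  also have "\<dots> = (\<Sum>x\<in>Poly_Mapping.keys p. \<Sum>y\<in>Poly_Mapping.keys r.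
     Poly_Mapping.single (x+y) (Poly_Mapping.lookup p x * Poly_Mapping.lookup r y))"
    by (simp add: sum_distrib_left sum_distrib_right mult_single) (rule sum.swap)
  also have "\<dots> = qmult 1 p r"
    unfolding qmult_def qmonom_def by (simp add: case_prod_beta plus_prod_def)
  finally show ?thesis by simp
qed

lemma qpow_X: "qpow q (Poly_Mapping.single (1,0) a) n = Poly_Mapping.single (n,0) (a^n)"
  by (induction n) (simp_all add: qone_def qmonom_def qmult_single mult.commute)

lemma qpow_Y: "qpow q (Poly_Mapping.single (0,1) a) n = Poly_Mapping.single (0,n) (a^n)"
  by (induction n) (simp_all add: qone_def qmonom_def qmult_single mult.commute)

lemma qscale_single: "qscale c (Poly_Mapping.single x d) = Poly_Mapping.single x (c*d)"
  by (simp add: qscale_def)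

lemma mat2_act_diag:
  "mat2_act q (a,0,0,d) p = (\<Sum>x\<in>Poly_Mapping.keys p.
      Poly_Mapping.single x (Poly_Mapping.lookup p x * (a ^ fst x * d ^ snd x)))"
  by (simp add: qmonom_def qpow_X[unfolded One_nat_def] qpow_Y[unfolded One_nat_def] qmult_single qscale_single case_prod_beta plus_prod_def
      mult.assoc)

lemma mat2_act_anti:
  "mat2_act q (0,b,c,0) p = (\<Sum>x\<in>Poly_Mapping.keys p.
      Poly_Mapping.single (snd x, fst x) (Poly_Mapping.lookup p x * (q ^ (fst x * snd x) * c ^ fst x * b ^ snd x)))"
  by (simp add: qmonom_def qpow_X[unfolded One_nat_def] qpow_Y[unfolded One_nat_def] qmult_single qscale_single case_prod_beta plus_prod_def
      mult.assoc)

lemma lookup_act_diag: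
  "Poly_Mapping.lookup (mat2_act q (a,0,0,d) p) (i,j) = Poly_Mapping.lookup p (i,j) * (a^i * d^j)"
  unfolding mat2_act_diag by (simp add: lookup_sum_single_id in_keys_iff)

lemma lookup_act_anti:
  "Poly_Mapping.lookup (mat2_act q (0,b,c,0) p) (i,j) = Poly_Mapping.lookup p (j,i) * (q^(j*i) * c^j * b^i)"
  unfolding mat2_act_anti by (simp add: lookup_sum_single_swap in_keys_iff)

definition sb :: "'k::comm_ring_1 qpoly \<Rightarrow> 'k qpoly \<Rightarrow> 'k qpoly \<Rightarrow> 'k qpoly" where
  "sb U V p = (\<Sum>x\<in>Poly_Mapping.keys p. Poly_Mapping.single 0 (Poly_Mapping.lookup p x) * U ^ fst x * V ^ snd x)"

lemma sb_superset:
  assumes "finite K" "Poly_Mapping.keys p \<subseteq> K"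
  shows "sb U V p = (\<Sum>x\<in>K. Poly_Mapping.single 0 (Poly_Mapping.lookup p x) * U ^ fst x * V ^ snd x)"
  unfolding sb_def
  by (rule sum.mono_neutral_left) (use assms in \<open>auto simp: in_keys_iff\<close>)

lemma sb_add: "sb U V (p + r) = sb U V p + sb U V r"
proof -
  let ?K = "Poly_Mapping.keys p \<union> Poly_Mapping.keys r"
  have k: "Poly_Mapping.keys (p + r) \<subseteq> ?K" by (rule keys_add)
  show ?thesis
    by (subst sb_superset[OF _ k], simp, subst sb_superset[of ?K p], simp, simp,
        subst sb_superset[of ?K r], simp, simp)
       (simp add: lookup_add single_add distrib_right sum.distrib)
qed

lemma sb_zero[simp]: "sb U V 0 = 0" by (simp add: sb_def)

lemma sb_sum: "sb U V (\<Sum>i\<in>I. f i) = (\<Sum>i\<in>I. sb U V (f i))"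
  by (induction I rule: infinite_finite_induct) (simp_all add: sb_add)

lemma sb_single: "sb U V (Poly_Mapping.single x c) = Poly_Mapping.single 0 c * U ^ fst x * V ^ snd x"
  by (cases "c = 0") (simp_all add: sb_def)

lemma single0_mult: "Poly_Mapping.single 0 a * Poly_Mapping.single 0 b = Poly_Mapping.single (0::'a::monoid_add) (a*b::'b::semiring_0)"
  by (simp add: mult_single)

lemma sb_mult: "sb U V (p * r) = sb U V p * sb U V r"
proof -
  have "p * r = (\<Sum>x\<in>Poly_Mapping.keys p. Poly_Mapping.single x (Poly_Mapping.lookup p x))
      * (\<Sum>y\<in>Poly_Mapping.keys r. Poly_Mapping.single y (Poly_Mapping.lookup r y))"
    using pm_sum_keys[of p] pm_sum_keys[of r] by simp
  also have "\<dots> = (\<Sum>x\<in>Poly_Mapping.keys p. \<Sum>y\<in>Poly_Mapping.keys r.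
     Poly_Mapping.single (x+y) (Poly_Mapping.lookup p x * Poly_Mapping.lookup r y))"
    by (simp add: sum_distrib_left sum_distrib_right mult_single) (rule sum.swap)
  finally have pr: "p * r = \<dots>" .
  have "sb U V (p * r) = (\<Sum>x\<in>Poly_Mapping.keys p. \<Sum>y\<in>Poly_Mapping.keys r.
     (Poly_Mapping.single 0 (Poly_Mapping.lookup p x) * U ^ fst x * V ^ snd x) *
     (Poly_Mapping.single 0 (Poly_Mapping.lookup r y) * U ^ fst y * V ^ snd y))"
    unfolding pr sb_sum sb_single
    by (intro sum.cong refl) (simp add: single0_mult power_add mult_ac)
  also have "\<dots> = sb U V p * sb U V r"
    unfolding sb_def by (simp add: sum_distrib_left sum_distrib_right) (rule sum.swap)
  finally show ?thesis .
qed

lemma sb_one[simp]: "sb U V 1 = 1"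
  unfolding sb_def by simp

lemma sb_const: "sb U V (Poly_Mapping.single 0 c) = Poly_Mapping.single 0 c"
  by (simp add: sb_single)

lemma sb_pow: "sb U V (p ^ n) = (sb U V p) ^ n"
  by (induction n) (simp_all add: sb_mult)

abbreviation X :: "'k::comm_ring_1 qpoly" where "X \<equiv> Poly_Mapping.single (1,0) 1"
abbreviation Y :: "'k::comm_ring_1 qpoly" where "Y \<equiv> Poly_Mapping.single (0,1) 1"

lemma sb_X: "sb U V X = U" by (simp add: sb_single)
lemma sb_Y: "sb U V Y = V" by (simp add: sb_single)

lemma sb_comp: "sb U V (sb U' V' p) = sb (sb U V U') (sb U V V') p"
  unfolding sb_def[of U' V'] sb_def[of "sb U V U'"]
  by (simp add: sb_sum sb_mult sb_const sb_pow)

lemma X_pow: "(X::'k::comm_ring_1 qpoly) ^ n = Poly_Mapping.single (n,0) 1"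
  by (induction n) (simp_all add: mult_single plus_prod_def zero_prod_def single_one[symmetric] del: single_one)

lemma Y_pow: "(Y::'k::comm_ring_1 qpoly) ^ n = Poly_Mapping.single (0,n) 1"
  by (induction n) (simp_all add: mult_single plus_prod_def zero_prod_def single_one[symmetric] del: single_one)

lemma sb_id: "sb X Y p = p"
proof -
  have "sb X Y p = (\<Sum>x\<in>Poly_Mapping.keys p. Poly_Mapping.single x (Poly_Mapping.lookup p x))"
    unfolding sb_def X_pow Y_pow
    by (intro sum.cong refl) (simp add: mult_single plus_prod_def zero_prod_def)
  then show ?thesis using pm_sum_keys[of p] by simp
qed

lemma qscale_mult: "qscale c p = Poly_Mapping.single 0 c * p"
  by (simp add: qscale_def mult_map_scale_conv_mult)

lemma qone_one: "qone = 1"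
  by (simp add: qone_def qmonom_def zero_prod_def[symmetric])

definition lin :: "'k::comm_ring_1 \<Rightarrow> 'k \<Rightarrow> 'k qpoly" where
  "lin a b = Poly_Mapping.single (1,0) a + Poly_Mapping.single (0,1) b"

lemma sb_lin: "sb (lin a b) (lin c d) (lin x y) = lin (x*a+y*c) (x*b+y*d)"
  unfolding lin_def[of x y] sb_add sb_single
  by (simp add: lin_def distrib_left mult_single single_add)

lemma sb_lin_id: "sb (lin 1 0) (lin 0 1) p = p"
  using sb_id[of p] by (simp add: lin_def)

lemma sb_comp_lin: "sb (lin a b) (lin c d) (sb (lin a' b') (lin c' d') p)
   = sb (lin (a'*a+b'*c) (a'*b+b'*d)) (lin (c'*a+d'*c) (c'*b+d'*d)) p"
  by (simp add: sb_comp sb_lin)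

lemma one_pm: "Poly_Mapping.single (0,0) 1 = (1::'k::comm_ring_1 qpoly)"
  by (simp add: zero_prod_def[symmetric])

lemma X_pow': "(Poly_Mapping.single (1,0) (a::'k::comm_ring_1)) ^ n = Poly_Mapping.single (n,0) (a^n)"
  by (induction n) (simp_all add: mult_single plus_prod_def mult.commute zero_prod_def[symmetric])

lemma Y_pow': "(Poly_Mapping.single (0,1) (a::'k::comm_ring_1)) ^ n = Poly_Mapping.single (0,n) (a^n)"
  by (induction n) (simp_all add: mult_single plus_prod_def mult.commute zero_prod_def[symmetric])

lemma sb_diag:
  "sb (lin a 0) (lin 0 d) p = (\<Sum>x\<in>Poly_Mapping.keys p.
      Poly_Mapping.single x (Poly_Mapping.lookup p x * (a ^ fst x * d ^ snd x)))"
  unfolding sb_def lin_def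
  by (intro sum.cong refl) (simp add: X_pow'[unfolded One_nat_def] Y_pow'[unfolded One_nat_def] mult_single plus_prod_def zero_prod_def mult.assoc)

lemma sb_anti:
  "sb (lin 0 c) (lin b 0) p = (\<Sum>x\<in>Poly_Mapping.keys p.
      Poly_Mapping.single (snd x, fst x) (Poly_Mapping.lookup p x * (c ^ fst x * b ^ snd x)))"
  unfolding sb_def lin_def
  by (intro sum.cong refl) (simp add: X_pow'[unfolded One_nat_def] Y_pow'[unfolded One_nat_def] mult_single plus_prod_def zero_prod_def mult.assoc)

lemma lookup_sb_diag:
  "Poly_Mapping.lookup (sb (lin a 0) (lin 0 d) p) (i,j) = Poly_Mapping.lookup p (i,j) * (a^i * d^j)"
  unfolding sb_diag by (simp add: lookup_sum_single_id in_keys_iff)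

lemma lookup_sb_anti:
  "Poly_Mapping.lookup (sb (lin 0 c) (lin b 0) p) (i,j) = Poly_Mapping.lookup p (j,i) * (c^j * b^i)"
  unfolding sb_anti by (simp add: lookup_sum_single_swap in_keys_iff)

lemma prim_pow_eq_1:
  assumes "primitive_root (w::'k::comm_ring_1) m"
  shows "w ^ n = 1 \<longleftrightarrow> m dvd n"
proof
  assume h: "w ^ n = 1"
  have m: "0 < m" "w ^ m = 1" using assms by (auto simp: primitive_root_def)
  have "w ^ n = (w ^ m) ^ (n div m) * w ^ (n mod m)"
  proof -
    have "w ^ n = w ^ (m * (n div m) + n mod m)" by simp
    then show ?thesis by (simp only: power_add power_mult)
  qed
  then have "w ^ (n mod m) = 1" using h m by simp
  moreover have "n mod m < m" using m by simp
  ultimately have "n mod m = 0"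
  proof (rule_tac ccontr)
    assume a: "w ^ (n mod m) = 1" "n mod m < m" "n mod m \<noteq> 0"
    then have "0 < n mod m" by simp
    then show False using a assms unfolding primitive_root_def by blast
  qed
  then show "m dvd n" by auto
next
  assume "m dvd n"
  then obtain t where "n = m * t" by auto
  then show "w ^ n = 1" using assms by (simp add: primitive_root_def power_mult)
qed

lemma prim_half:
  assumes "primitive_root (w::'k::field_char_0) (2*m)"
  shows "w ^ m = -1"
proof -
  have "(w ^ m)^2 = 1" using assms by (simp add: primitive_root_def power_mult[symmetric] mult.commute)
  then have "w ^ m = 1 \<or> w ^ m = -1" by (simp add: power2_eq_1_iff)
  moreover have "w ^ m \<noteq> 1"
  proof -
    have "0 < 2*m" using assms unfolding primitive_root_def by blast
    then have "0 < m" "m < 2*m" by simp_all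
    then show ?thesis using assms unfolding primitive_root_def by blast
  qed
  ultimately show ?thesis by simp
qed

lemma neg1_pow_eq_1: "((-1::'k::field_char_0) ^ n = 1) \<longleftrightarrow> even n"
  by (cases "even n") simp_all

definition condA :: "nat \<Rightarrow> 'k::comm_ring_1 qpoly \<Rightarrow> bool" where
  "condA k p \<longleftrightarrow> (\<forall>i j. Poly_Mapping.lookup p (i,j) \<noteq> 0 \<longrightarrow> 2*k dvd i+j) \<and>
     (\<forall>i j. Poly_Mapping.lookup p (j,i) = (-1)^(i*j) * Poly_Mapping.lookup p (i,j))"

definition condB :: "nat \<Rightarrow> 'k::comm_ring_1 \<Rightarrow> 'k qpoly \<Rightarrow> bool" where
  "condB k z p \<longleftrightarrow> (\<forall>i j. Poly_Mapping.lookup p (i,j) \<noteq> 0 \<longrightarrow> z^i * (z^(2*k+1))^j = 1)"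

lemma G_elems:
  assumes "g \<in> gen_group {(-1,0,0,-1), (0,w^2,w^2,0)}" "w ^ (4*k) = (1::'k::comm_ring_1)"
  shows "\<exists>\<zeta>. \<zeta>^(2*k) = 1 \<and> (g = (\<zeta>,0,0,\<zeta>) \<or> g = (0,\<zeta>,\<zeta>,0))"
  using assms(1)
proof induction
  case gen_id
  show ?case by (rule exI[of _ 1]) (simp add: mat2_id_def)
next
  case (gen_step M g)
  then obtain \<zeta> where z: "\<zeta>^(2*k) = 1" "g = (\<zeta>,0,0,\<zeta>) \<or> g = (0,\<zeta>,\<zeta>,0)" by blast
  have "(w^2*\<zeta>)^(2*k) = w^(2*(2*k)) * \<zeta>^(2*k)"
    by (simp only: power_mult_distrib power_mult)
  also have "\<dots> = 1" using z assms(2) by simp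
  finally have w: "(w^2*\<zeta>)^(2*k) = 1" .
  have m: "(-\<zeta>)^(2*k) = 1" using z by (simp add: power_mult)
  from gen_step(1) z(2) show ?case
  proof (elim insertE disjE)
    assume "M = (-1,0,0,-1)" "g = (\<zeta>,0,0,\<zeta>)"
    then have e: "mat2_mult M g = (-\<zeta>,0,0,-\<zeta>)" by simp
    show ?thesis by (rule exI[of _ "-\<zeta>"], rule conjI[OF m], rule disjI1, rule e)
  next
    assume "M = (-1,0,0,-1)" "g = (0,\<zeta>,\<zeta>,0)"
    then have e: "mat2_mult M g = (0,-\<zeta>,-\<zeta>,0)" by simp
    show ?thesis by (rule exI[of _ "-\<zeta>"], rule conjI[OF m], rule disjI2, rule e)
  next
    assume "M = (0,w^2,w^2,0)" "g = (\<zeta>,0,0,\<zeta>)"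
    then have e: "mat2_mult M g = (0,w^2*\<zeta>,w^2*\<zeta>,0)" by simp
    show ?thesis by (rule exI[of _ "w^2*\<zeta>"], rule conjI[OF w], rule disjI2, rule e)
  next
    assume "M = (0,w^2,w^2,0)" "g = (0,\<zeta>,\<zeta>,0)"
    then have e: "mat2_mult M g = (w^2*\<zeta>,0,0,w^2*\<zeta>)" by simp
    show ?thesis by (rule exI[of _ "w^2*\<zeta>"], rule conjI[OF w], rule disjI1, rule e)
  qed simp_all
qed

lemma two_k_dvd: "odd k \<Longrightarrow> even n \<Longrightarrow> k dvd n \<Longrightarrow> 2*k dvd (n::nat)"
proof -
  assume a: "odd k" "even n" "k dvd n"
  then obtain t where t: "n = k * t" by blast
  then have "even t" using a by simp
  then obtain s where "t = 2 * s" by blast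
  then show ?thesis using t by simp
qed

lemma invA:
  fixes w :: "'k::field_char_0"
  assumes k: "odd k" and w: "primitive_root w (4*k)"
  shows "p \<in> invariants (-1) (G_nk 2 k w) \<longleftrightarrow> condA k p"
proof -
  have w2k: "w^(2*k) = -1" using prim_half[of w "2*k"] w by (simp add: mult.assoc)
  have w4k: "w^(4*k) = 1" using w by (simp add: primitive_root_def)
  have G: "G_nk 2 k w = gen_group {(-1,0,0,-1), (0,w^2,w^2,0)}"
    unfolding G_nk_def w2k by simp
  let ?D = "(-1,0,0,-1) :: 'k mat2" and ?J = "(0,w^2,w^2,0) :: 'k mat2"
  have Din: "?D \<in> G_nk 2 k w" unfolding G
    using gen_group.gen_step[OF _ gen_group.gen_id, of ?D] by (simp add: mat2_id_def)
  have Jin: "?J \<in> G_nk 2 k w" unfolding G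
    using gen_group.gen_step[OF _ gen_group.gen_id, of ?J] by (simp add: mat2_id_def)
  have J2in: "(w^2*w^2,0,0,w^2*w^2) \<in> G_nk 2 k w" unfolding G
    using gen_group.gen_step[OF _ Jin[unfolded G], of ?J] by simp
  show ?thesis
  proof
    assume p: "p \<in> invariants (-1) (G_nk 2 k w)"
    have eD: "mat2_act (-1) ?D p = p" using p Din unfolding invariants_def by blast
    have eJ: "mat2_act (-1) ?J p = p" using p Jin unfolding invariants_def by blast
    have eJ2: "mat2_act (-1) (w^2*w^2,0,0,w^2*w^2) p = p" using p J2in unfolding invariants_def by blast
    have deg: "2*k dvd i+j" if nz: "Poly_Mapping.lookup p (i,j) \<noteq> 0" for i j
    proof -
      have "Poly_Mapping.lookup p (i,j) * ((-1)^i * (-1)^j) = Poly_Mapping.lookup p (i,j)"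
        using arg_cong[OF eD, of "\<lambda>q. Poly_Mapping.lookup q (i,j)"] by (simp only: lookup_act_diag)
      then have "(-1::'k)^(i+j) = 1" using nz by (simp add: power_add)
      then have ev: "even (i+j)" by (simp add: neg1_pow_eq_1)
      have "Poly_Mapping.lookup p (i,j) * ((w^2*w^2)^i * (w^2*w^2)^j) = Poly_Mapping.lookup p (i,j)"
        using arg_cong[OF eJ2, of "\<lambda>q. Poly_Mapping.lookup q (i,j)"] by (simp only: lookup_act_diag)
      then have "(w^2*w^2)^(i+j) = 1" using nz by (simp add: power_add)
      then have "w^(4*(i+j)) = 1" by (simp add: power_mult[symmetric] power_add[symmetric])
      then have "4*k dvd 4*(i+j)" using prim_pow_eq_1[OF w] by blast
      then have "k dvd i+j" using nat_mult_dvd_cancel1[of 4 k "i+j"] by simp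
      then show ?thesis using two_k_dvd[OF k ev] by simp
    qed
    have w2: "(w^2)^(i+j) = 1" if h: "2*k dvd i+j" for i j
    proof -
      obtain t where "i+j = 2*k*t" using h by blast
      then have "(w^2)^(i+j) = (w^(4*k))^t" by (simp add: power_mult[symmetric] mult.assoc)
      then show ?thesis using w4k by simp
    qed
    have sym: "Poly_Mapping.lookup p (j,i) = (-1)^(i*j) * Poly_Mapping.lookup p (i,j)" for i j
    proof -
      have e: "Poly_Mapping.lookup p (i,j) * ((-1)^(i*j) * (w^2)^i * (w^2)^j) = Poly_Mapping.lookup p (j,i)"
        using arg_cong[OF eJ, of "\<lambda>q. Poly_Mapping.lookup q (j,i)"] by (simp only: lookup_act_anti)
      show ?thesis
      proof (cases "Poly_Mapping.lookup p (i,j) = 0")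
        case True then show ?thesis using e by simp
      next
        case False
        then have "(w^2)^(i+j) = 1" using w2 deg by blast
        then show ?thesis using e by (simp add: power_add mult_ac)
      qed
    qed
    show "condA k p" unfolding condA_def using deg sym by blast
  next
    assume c: "condA k p"
    have deg: "\<And>i j. Poly_Mapping.lookup p (i,j) \<noteq> 0 \<Longrightarrow> 2*k dvd i+j"
      and sym: "\<And>i j. Poly_Mapping.lookup p (j,i) = (-1)^(i*j) * Poly_Mapping.lookup p (i,j)"
      using c unfolding condA_def by blast+
    have z1: "\<zeta>^(i+j) = 1" if h: "\<zeta>^(2*k) = 1" "2*k dvd i+j" for \<zeta> :: 'k and i j
    proof -
      obtain t where "i+j = 2*k*t" using h by blast
      then show ?thesis using h by (simp add: power_mult)
    qed
    show "p \<in> invariants (-1) (G_nk 2 k w)"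
      unfolding invariants_def
    proof (safe)
      fix M assume "M \<in> G_nk 2 k w"
      then obtain \<zeta> where z: "\<zeta>^(2*k) = 1" "M = (\<zeta>,0,0,\<zeta>) \<or> M = (0,\<zeta>,\<zeta>,0)"
        using G_elems[OF _ w4k] unfolding G by blast
      from z(2) show "mat2_act (-1) M p = p"
      proof
        assume M: "M = (\<zeta>,0,0,\<zeta>)"
        show ?thesis
        proof (rule poly_mapping_eqI, clarify)
          fix i j
          show "Poly_Mapping.lookup (mat2_act (-1) M p) (i,j) = Poly_Mapping.lookup p (i,j)"
            unfolding M lookup_act_diag
            using z1[OF z(1) deg[of i j]] by (cases "Poly_Mapping.lookup p (i,j) = 0") (simp_all add: power_add)
        qed
      next
        assume M: "M = (0,\<zeta>,\<zeta>,0)"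
        show ?thesis
        proof (rule poly_mapping_eqI, clarify)
          fix i j
          show "Poly_Mapping.lookup (mat2_act (-1) M p) (i,j) = Poly_Mapping.lookup p (i,j)"
            unfolding M lookup_act_anti
            using z1[OF z(1) deg[of j i]] sym[of j i]
            by (cases "Poly_Mapping.lookup p (j,i) = 0") (simp_all add: power_add mult_ac)
        qed
      qed
    qed
  qed
qed

lemma cyc_elems:
  assumes "g \<in> gen_group {(z,0,0,y)}"
  shows "\<exists>m. g = (z^m,0,0,(y::'k::comm_ring_1)^m)"
  using assms
proof induction
  case gen_id
  show ?case by (rule exI[of _ 0]) (simp add: mat2_id_def)
next
  case (gen_step M g)
  then obtain m where "g = (z^m,0,0,y^m)" by blast
  then have "mat2_mult M g = (z^Suc m,0,0,y^Suc m)" using gen_step(1) by simp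
  then show ?case by blast
qed

lemma invB:
  fixes z :: "'k::field_char_0"
  shows "p \<in> invariants 1 (cyclic_grp (4*k) (2*k+1) z) \<longleftrightarrow> condB k z p"
proof
  let ?g = "(z,0,0,z^(2*k+1)) :: 'k mat2"
  have gin: "?g \<in> cyclic_grp (4*k) (2*k+1) z" unfolding cyclic_grp_def
    using gen_group.gen_step[OF _ gen_group.gen_id, of ?g] by (simp add: mat2_id_def)
  assume p: "p \<in> invariants 1 (cyclic_grp (4*k) (2*k+1) z)"
  then have e: "mat2_act 1 ?g p = p" using gin unfolding invariants_def by blast
  show "condB k z p" unfolding condB_def
  proof (intro allI impI)
    fix i j assume nz: "Poly_Mapping.lookup p (i,j) \<noteq> 0"
    have "Poly_Mapping.lookup p (i,j) * (z^i * (z^(2*k+1))^j) = Poly_Mapping.lookup p (i,j)"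
      using arg_cong[OF e, of "\<lambda>q. Poly_Mapping.lookup q (i,j)"] by (simp only: lookup_act_diag)
    then show "z^i * (z^(2*k+1))^j = 1" using nz by simp
  qed
next
  assume c: "condB k z p"
  show "p \<in> invariants 1 (cyclic_grp (4*k) (2*k+1) z)"
    unfolding invariants_def
  proof safe
    fix M assume "M \<in> cyclic_grp (4*k) (2*k+1) z"
    then obtain m where M: "M = (z^m,0,0,(z^(2*k+1))^m)"
      using cyc_elems unfolding cyclic_grp_def by blast
    show "mat2_act 1 M p = p"
    proof (rule poly_mapping_eqI, clarify)
      fix i j
      have "(z^m)^i * ((z^(2*k+1))^m)^j = (z^i * (z^(2*k+1))^j)^m"
        by (simp add: power_mult_distrib power_mult[symmetric] ac_simps)
      moreover have "Poly_Mapping.lookup p (i,j) * (z^i * (z^(2*k+1))^j)^m = Poly_Mapping.lookup p (i,j)"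
      proof (cases "Poly_Mapping.lookup p (i,j) = 0")
        case False
        then have "z^i * (z^(2*k+1))^j = 1" using c unfolding condB_def by blast
        then show ?thesis by (simp only: power_one mult_1_right)
      qed simp
      ultimately show "Poly_Mapping.lookup (mat2_act 1 M p) (i,j) = Poly_Mapping.lookup p (i,j)"
        unfolding M lookup_act_diag by (simp only:)
    qed
  qed
qed

lemma lookup_C_mult: "Poly_Mapping.lookup (Poly_Mapping.single 0 c * p) k = (c::'k::comm_ring_1) * Poly_Mapping.lookup p k"
  by (simp add: mult_map_scale_conv_mult[symmetric] map.rep_eq when_def)

definition Tm :: "'k::comm_ring_1 \<Rightarrow> 'k qpoly \<Rightarrow> 'k qpoly" where
  "Tm t p = Poly_Mapping.mapp (\<lambda>x c. t^(snd x * snd x) * c) p"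

lemma lookup_Tm: "Poly_Mapping.lookup (Tm t p) (i,j) = t^(j*j) * Poly_Mapping.lookup p (i,j)"
  by (simp add: Tm_def lookup_mapp when_def in_keys_iff)

lemma Tm_eqI: "(\<And>i j. Poly_Mapping.lookup p (i,j) = Poly_Mapping.lookup q (i,j)) \<Longrightarrow> p = q"
  by (rule poly_mapping_eqI) auto

lemma Tm_inv: "t * t = -1 \<Longrightarrow> Tm (-t) (Tm t p) = p"
  by (rule Tm_eqI) (simp add: lookup_Tm mult.assoc[symmetric] power_mult_distrib[symmetric])

lemma keys_Tm: "t \<noteq> (0::'k::field) \<Longrightarrow> Poly_Mapping.keys (Tm t p) = Poly_Mapping.keys p"
  by (auto simp: in_keys_iff lookup_Tm)

lemma Tm_add: "Tm t (p + q) = Tm t p + Tm t q"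
  by (rule Tm_eqI) (simp add: lookup_Tm lookup_add distrib_left)

lemma Tm_zero[simp]: "Tm t 0 = 0"
  by (rule Tm_eqI) (simp add: lookup_Tm)

lemma Tm_sum: "Tm t (\<Sum>i\<in>I. f i) = (\<Sum>i\<in>I. Tm t (f i))"
  by (induction I rule: infinite_finite_induct) (simp_all add: Tm_add)

lemma Tm_single: "Tm t (Poly_Mapping.single (a,b) c) = Poly_Mapping.single (a,b) (t^(b*b) * c)"
  by (rule Tm_eqI) (simp add: lookup_Tm lookup_single when_def)

lemma Tm_scale: "Tm t (Poly_Mapping.single 0 c * p) = Poly_Mapping.single 0 c * Tm t p"
  by (rule Tm_eqI) (simp add: lookup_Tm lookup_C_mult mult.left_commute)

lemma Tm_one: "Tm t 1 = 1"
  by (rule Tm_eqI) (simp add: lookup_Tm lookup_one when_def zero_prod_def)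

lemma iota_pow4: "t * t = (-1::'k::comm_ring_1) \<Longrightarrow> t ^ (4*n) = 1"
proof -
  assume h: "t * t = -1"
  have "t^4 = (t*t)*(t*t)" by (simp add: power_numeral_reduce mult_ac)
  then have "t^4 = 1" using h by simp
  then show ?thesis by (simp add: power_mult)
qed

lemma iota_sq_sum:
  assumes h: "t * t = (-1::'k::comm_ring_1)" and e: "even (a+b)"
  shows "t^((j+b)*(j+b)) * (-1)^(j*a) = t^(j*j) * t^(b*b)"
proof -
  have "(j+b)*(j+b) = j*j + b*b + 2*(j*b)" by (simp add: algebra_simps)
  then have "t^((j+b)*(j+b)) = t^(j*j) * t^(b*b) * (t*t)^(j*b)"
    by (simp add: power_add power_mult power2_eq_square)
  also have "\<dots> = t^(j*j) * t^(b*b) * (-1)^(j*b)" using h by simp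
  finally have "t^((j+b)*(j+b)) * (-1)^(j*a) = t^(j*j) * t^(b*b) * ((-1)^(j*b) * (-1)^(j*a))"
    by (simp add: mult_ac)
  also have "(-1::'k)^(j*b) * (-1)^(j*a) = 1"
  proof -
    have "even (j*b + j*a)" using e by (simp add: add.commute distrib_left[symmetric])
    then show ?thesis by (simp add: power_add[symmetric])
  qed
  finally show ?thesis by simp
qed

lemma Tm_mult:
  fixes t :: "'k::field"
  assumes h: "t * t = -1" and ev: "\<And>x. x \<in> Poly_Mapping.keys r \<Longrightarrow> even (fst x + snd x)"
  shows "Tm t (qmult (-1) p r) = Tm t p * Tm t r"
proof -
  have t0: "t \<noteq> 0" using h by auto
  have "Tm t p * Tm t r = qmult 1 (Tm t p) (Tm t r)" by (simp add: qmult_1)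
  also have "\<dots> = (\<Sum>(i,j)\<in>Poly_Mapping.keys p. \<Sum>(a,b)\<in>Poly_Mapping.keys r.
      qmonom (t^(j*j) * Poly_Mapping.lookup p (i,j) * (t^(b*b) * Poly_Mapping.lookup r (a,b))) (i + a) (j + b))"
    unfolding qmult_def keys_Tm[OF t0] by (simp add: lookup_Tm case_prod_beta)
  also have "\<dots> = (\<Sum>(i,j)\<in>Poly_Mapping.keys p. \<Sum>(a,b)\<in>Poly_Mapping.keys r.
      Tm t (qmonom ((-1) ^ (j * a) * Poly_Mapping.lookup p (i, j) * Poly_Mapping.lookup r (a, b)) (i + a) (j + b)))"
  proof (intro sum.cong refl, clarify, intro sum.cong refl, clarify)
    fix i j a b assume "(a,b) \<in> Poly_Mapping.keys r"
    then have "even (a+b)" using ev by fastforce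
    then have e: "t^((j+b)*(j+b)) * (-1)^(j*a) = t^(j*j) * t^(b*b)" using iota_sq_sum[OF h] by blast
    have "t^((j+b)*(j+b)) * ((-1)^(j*a) * Poly_Mapping.lookup p (i, j) * Poly_Mapping.lookup r (a, b))
       = (t^((j+b)*(j+b)) * (-1)^(j*a)) * Poly_Mapping.lookup p (i, j) * Poly_Mapping.lookup r (a, b)"
      by (simp only: mult.assoc)
    also have "\<dots> = t^(j*j) * Poly_Mapping.lookup p (i,j) * (t^(b*b) * Poly_Mapping.lookup r (a,b))"
      unfolding e by (simp only: mult_ac)
    finally have eq: "t^((j+b)*(j+b)) * ((-1)^(j*a) * Poly_Mapping.lookup p (i, j) * Poly_Mapping.lookup r (a, b))
       = t^(j*j) * Poly_Mapping.lookup p (i,j) * (t^(b*b) * Poly_Mapping.lookup r (a,b))" .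
    show "qmonom (t^(j*j) * Poly_Mapping.lookup p (i,j) * (t^(b*b) * Poly_Mapping.lookup r (a,b))) (i + a) (j + b)
      = Tm t (qmonom ((-1) ^ (j * a) * Poly_Mapping.lookup p (i, j) * Poly_Mapping.lookup r (a, b)) (i + a) (j + b))"
      unfolding qmonom_def Tm_single eq by (rule refl)
  qed
  also have "\<dots> = Tm t (qmult (-1) p r)"
    unfolding qmult_def by (simp add: Tm_sum case_prod_beta)
  finally show ?thesis by simp
qed

definition condC :: "nat \<Rightarrow> 'k::comm_ring_1 qpoly \<Rightarrow> bool" where
  "condC k p \<longleftrightarrow> (\<forall>i j. Poly_Mapping.lookup p (i,j) \<noteq> 0 \<longrightarrow> 2*k dvd i+j) \<and>
     (\<forall>i j. Poly_Mapping.lookup p (j,i) = (-1)^j * Poly_Mapping.lookup p (i,j))"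

lemma parity_L:
  assumes h: "t * t = (-1::'k::comm_ring_1)" and e: "even (i+j)"
  shows "t^(i*i) * (-1)^(i*j) = (-1)^j * t^(j*j)" and "t^(i*i) * (-1)^j = (-1)^(i*j) * t^(j*j)"
proof -
  have "t^(i*i) = t^(j*j) \<and> (-1::'k)^(i*j) = (-1)^j"
  proof (cases "even j")
    case True
    then have "even i" using e by simp
    then obtain a b where ab: "i = 2*a" "j = 2*b" using True by (meson evenE)
    have "i*i = 4*(a*a)" "j*j = 4*(b*b)" using ab by simp_all
    then show ?thesis using iota_pow4[OF h] True \<open>even i\<close> by simp
  next
    case False
    then have "odd i" using e by simp
    then obtain a b where ab: "i = 2*a+1" "j = 2*b+1" using False by (meson oddE)
    have "i*i = 4*(a*a+a)+1" "j*j = 4*(b*b+b)+1" using ab by (simp_all add: algebra_simps)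
    moreover have "odd (i*j)" using False \<open>odd i\<close> by simp
    ultimately show ?thesis using iota_pow4[OF h] False by (simp add: power_add)
  qed
  then show "t^(i*i) * (-1)^(i*j) = (-1)^j * t^(j*j)" and "t^(i*i) * (-1)^j = (-1)^(i*j) * t^(j*j)"
    by (simp_all add: mult.commute)
qed

lemma condA_condC:
  assumes h: "t * t = (-1::'k::comm_ring_1)" and c: "condA k p"
  shows "condC k (Tm t p)"
proof -
  have deg: "\<And>i j. Poly_Mapping.lookup p (i,j) \<noteq> 0 \<Longrightarrow> 2*k dvd i+j"
    and sym: "\<And>i j. Poly_Mapping.lookup p (j,i) = (-1)^(i*j) * Poly_Mapping.lookup p (i,j)"
    using c unfolding condA_def by blast+
  have "Poly_Mapping.lookup (Tm t p) (j,i) = (-1)^j * Poly_Mapping.lookup (Tm t p) (i,j)" for i j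
  proof (cases "Poly_Mapping.lookup p (i,j) = 0")
    case True
    have "Poly_Mapping.lookup p (j,i) = 0" using sym[where i=i and j=j] True by (metis mult_zero_right)
    then show ?thesis using True by (simp add: lookup_Tm)
  next
    case False
    then have "even (i+j)" using deg[of i j] by (meson dvd_mult_left even_mult_iff dvd_trans dvd_triv_left)
    then have L: "t^(i*i) * (-1)^(i*j) = (-1)^j * t^(j*j)" using parity_L[OF h] by blast
    have "Poly_Mapping.lookup (Tm t p) (j,i) = (t^(i*i) * (-1)^(i*j)) * Poly_Mapping.lookup p (i,j)"
      by (simp add: lookup_Tm sym[where i=i and j=j] mult.assoc)
    also have "\<dots> = (-1)^j * Poly_Mapping.lookup (Tm t p) (i,j)" unfolding L by (simp add: lookup_Tm mult.assoc)
    finally show ?thesis .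
  qed
  moreover have "\<And>i j. Poly_Mapping.lookup (Tm t p) (i,j) \<noteq> 0 \<Longrightarrow> 2*k dvd i+j"
  proof -
    fix i j assume "Poly_Mapping.lookup (Tm t p) (i,j) \<noteq> 0"
    then have "Poly_Mapping.lookup p (i,j) \<noteq> 0" unfolding lookup_Tm by (metis mult_zero_right)
    then show "2*k dvd i+j" by (rule deg)
  qed
  ultimately show ?thesis unfolding condC_def by blast
qed

lemma condC_condA:
  assumes h: "t * t = (-1::'k::comm_ring_1)" and c: "condC k p"
  shows "condA k (Tm t p)"
proof -
  have deg: "\<And>i j. Poly_Mapping.lookup p (i,j) \<noteq> 0 \<Longrightarrow> 2*k dvd i+j"
    and sym: "\<And>i j. Poly_Mapping.lookup p (j,i) = (-1)^j * Poly_Mapping.lookup p (i,j)"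
    using c unfolding condC_def by blast+
  have "Poly_Mapping.lookup (Tm t p) (j,i) = (-1)^(i*j) * Poly_Mapping.lookup (Tm t p) (i,j)" for i j
  proof (cases "Poly_Mapping.lookup p (i,j) = 0")
    case True
    have "Poly_Mapping.lookup p (j,i) = 0" using sym[where i=i and j=j] True by (metis mult_zero_right)
    then show ?thesis using True by (simp add: lookup_Tm)
  next
    case False
    then have "even (i+j)" using deg[of i j] by (meson dvd_mult_left even_mult_iff dvd_trans dvd_triv_left)
    then have L: "t^(i*i) * (-1)^j = (-1)^(i*j) * t^(j*j)" using parity_L[OF h] by blast
    have "Poly_Mapping.lookup (Tm t p) (j,i) = (t^(i*i) * (-1)^j) * Poly_Mapping.lookup p (i,j)"
      by (simp add: lookup_Tm sym[where i=i and j=j] mult.assoc)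
    also have "\<dots> = (-1)^(i*j) * Poly_Mapping.lookup (Tm t p) (i,j)" unfolding L by (simp add: lookup_Tm mult.assoc)
    finally show ?thesis .
  qed
  moreover have "\<And>i j. Poly_Mapping.lookup (Tm t p) (i,j) \<noteq> 0 \<Longrightarrow> 2*k dvd i+j"
  proof -
    fix i j assume "Poly_Mapping.lookup (Tm t p) (i,j) \<noteq> 0"
    then have "Poly_Mapping.lookup p (i,j) \<noteq> 0" unfolding lookup_Tm by (metis mult_zero_right)
    then show "2*k dvd i+j" by (rule deg)
  qed
  ultimately show ?thesis unfolding condA_def by blast
qed

lemma diag_fix: "sb (lin a 0) (lin 0 d) q = q \<longleftrightarrow> (\<forall>i j. Poly_Mapping.lookup q (i,j) \<noteq> 0 \<longrightarrow> a^i * d^j = (1::'k::field))"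
proof
  assume e: "sb (lin a 0) (lin 0 d) q = q"
  show "\<forall>i j. Poly_Mapping.lookup q (i,j) \<noteq> 0 \<longrightarrow> a^i * d^j = 1"
  proof (intro allI impI)
    fix i j assume nz: "Poly_Mapping.lookup q (i,j) \<noteq> 0"
    have "Poly_Mapping.lookup q (i,j) * (a^i * d^j) = Poly_Mapping.lookup q (i,j) * 1"
      using arg_cong[OF e, of "\<lambda>r. Poly_Mapping.lookup r (i,j)"] by (simp only: lookup_sb_diag mult_1_right)
    then show "a^i * d^j = 1" using nz by (simp only: mult_cancel_left) simp
  qed
next
  assume h: "\<forall>i j. Poly_Mapping.lookup q (i,j) \<noteq> 0 \<longrightarrow> a^i * d^j = 1"
  show "sb (lin a 0) (lin 0 d) q = q"
    by (rule Tm_eqI) (metis h lookup_sb_diag mult_1_right mult_zero_left)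
qed

lemma condC_fix:
  fixes \<zeta> :: "'k::field"
  assumes hz: "\<And>n. \<zeta>^n = 1 \<longleftrightarrow> 2*k dvd n"
  shows "condC k c \<longleftrightarrow> (sb (lin 0 1) (lin (-1) 0) c = c \<and> sb (lin \<zeta> 0) (lin 0 \<zeta>) c = c)"
proof
  assume c: "condC k c"
  have deg: "\<And>i j. Poly_Mapping.lookup c (i,j) \<noteq> 0 \<Longrightarrow> 2*k dvd i+j"
    and sym: "\<And>i j. Poly_Mapping.lookup c (j,i) = (-1)^j * Poly_Mapping.lookup c (i,j)"
    using c unfolding condC_def by blast+
  have "sb (lin 0 1) (lin (-1) 0) c = c"
  proof (rule Tm_eqI)
    fix i j
    show "Poly_Mapping.lookup (sb (lin 0 1) (lin (-1) 0) c) (i,j) = Poly_Mapping.lookup c (i,j)"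
      unfolding lookup_sb_anti using sym[where i=j and j=i] by (simp add: mult.commute)
  qed
  moreover have "sb (lin \<zeta> 0) (lin 0 \<zeta>) c = c"
    unfolding diag_fix using deg hz by (simp add: power_add[symmetric])
  ultimately show "sb (lin 0 1) (lin (-1) 0) c = c \<and> sb (lin \<zeta> 0) (lin 0 \<zeta>) c = c" by blast
next
  assume e: "sb (lin 0 1) (lin (-1) 0) c = c \<and> sb (lin \<zeta> 0) (lin 0 \<zeta>) c = c"
  have "\<forall>i j. Poly_Mapping.lookup c (i,j) \<noteq> 0 \<longrightarrow> 2*k dvd i+j"
    using e unfolding diag_fix by (simp add: power_add[symmetric] hz)
  moreover have "Poly_Mapping.lookup c (j,i) = (-1)^j * Poly_Mapping.lookup c (i,j)" for i j
    using arg_cong[OF conjunct1[OF e], of "\<lambda>r. Poly_Mapping.lookup r (j,i)"]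
    unfolding lookup_sb_anti by (simp add: mult.commute)
  ultimately show "condC k c" unfolding condC_def by blast
qed

lemma arithB:
  fixes z :: "'k::field_char_0"
  assumes k: "odd k" and z2k: "z^(2*k) = -1" and hz: "\<And>n. z^n = 1 \<longleftrightarrow> 4*k dvd n"
  shows "z^i * (z^(2*k+1))^j = 1 \<longleftrightarrow> ((z^k)^i * (-(z^k))^j = 1 \<and> (z^2)^i * (z^2)^j = 1)"
proof -
  have zz: "z^(2*k+1) = -z" using z2k by simp
  have e1: "z^i * (z^(2*k+1))^j = z^(i+j) * (-1)^j"
    unfolding zz unfolding power_minus[of z j] power_add by (simp only: mult_ac)
  have e2: "(z^k)^i * (-(z^k))^j = (z^(i+j))^k * (-1)^j"
  proof -
    have "(z^k)^i * (-(z^k))^j = ((z^k)^i * (z^k)^j) * (-1)^j"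
      unfolding power_minus[of "z^k" j] by (simp only: mult_ac)
    also have "(z^k)^i * (z^k)^j = (z^(i+j))^k"
      by (simp only: power_add[symmetric] power_mult[symmetric] mult.commute) (simp add: algebra_simps)
    finally show ?thesis .
  qed
  have e3: "(z^2)^i * (z^2)^j = (z^(i+j))^2"
    by (simp only: power_add[symmetric] power_mult[symmetric] mult.commute) (simp add: algebra_simps)
  have "((-1::'k)^j)^2 = ((-1)^2)^j" by (simp only: power_mult[symmetric] mult.commute)
  then have sq: "((-1::'k)^j)^2 = 1" by simp
  show ?thesis
  proof
    assume "z^i * (z^(2*k+1))^j = 1"
    then have "z^(i+j) * (-1)^j = 1" using e1 by simp
    then have "z^(i+j) * (-1)^j * (-1)^j = (-1)^j" by simp
    then have "z^(i+j) * ((-1)^j)^2 = (-1)^j" by (simp only: power2_eq_square mult.assoc)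
    then have s: "z^(i+j) = (-1)^j" by (simp only: sq mult_1_right)
    have "((-1::'k)^j)^k * (-1)^j = (-1)^(j*k + j)" by (simp only: power_mult power_add)
    also have "\<dots> = 1" using k by simp
    finally have "(z^k)^i * (-(z^k))^j = 1" using e2 s by simp
    moreover have "(z^2)^i * (z^2)^j = 1" unfolding e3 s by (rule sq)
    ultimately show "(z^k)^i * (-(z^k))^j = 1 \<and> (z^2)^i * (z^2)^j = 1" by blast
  next
    assume a: "(z^k)^i * (-(z^k))^j = 1 \<and> (z^2)^i * (z^2)^j = 1"
    then have "(z^(i+j))^2 = 1" using e3 by simp
    then have "z^(2*(i+j)) = 1" by (simp only: power_mult mult.commute)
    then have "4*k dvd 2*(i+j)" using hz by blast
    then have "2*(2*k) dvd 2*(i+j)" by simp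
    then have "2*k dvd i+j" using nat_mult_dvd_cancel1[of 2 "2*k" "i+j"] by simp
    then obtain m where m: "i+j = 2*k*m" by blast
    have zs: "z^(i+j) = (-1)^m" unfolding m power_mult[of z "2*k" m] z2k by (rule refl)
    have "((-1::'k)^m)^k = ((-1)^k)^m" by (simp only: power_mult[symmetric] mult.commute)
    then have "(z^(i+j))^k = (-1)^m" unfolding zs using k by simp
    then have "(-1)^m * (-1::'k)^j = 1" using a e2 by simp
    then show "z^i * (z^(2*k+1))^j = 1" unfolding e1 zs .
  qed
qed

lemma condB_fix:
  fixes z :: "'k::field_char_0"
  assumes k: "odd k" and z2k: "z^(2*k) = -1" and hz: "\<And>n. z^n = 1 \<longleftrightarrow> 4*k dvd n"
  shows "condB k z q \<longleftrightarrow> (sb (lin (z^k) 0) (lin 0 (-(z^k))) q = q \<and> sb (lin (z^2) 0) (lin 0 (z^2)) q = q)"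
  unfolding condB_def diag_fix arithB[OF k z2k hz] by blast

lemma sb_lin_eq: "a = a' \<Longrightarrow> b = b' \<Longrightarrow> c = c' \<Longrightarrow> d = d' \<Longrightarrow> sb (lin a b) (lin c d) p = sb (lin a' b') (lin c' d') p"
  by simp

context
  fixes t :: "'k::field_char_0"
  assumes h: "t * t = -1"
begin

definition "SS = sb (lin (1/2) (1/2)) (lin (-t/2) (t/2))"
definition "SI = sb (lin 1 t) (lin 1 (-t))"

lemma SS_SI: "SS (SI p) = p"
  unfolding SS_def SI_def sb_comp_lin
  by (subst sb_lin_id[symmetric, of p], rule sb_lin_eq) (use h in \<open>simp_all add: field_simps\<close>)

lemma SI_SS: "SI (SS p) = p"
  unfolding SS_def SI_def sb_comp_lin
  by (subst sb_lin_id[symmetric, of p], rule sb_lin_eq) (use h in \<open>simp_all add: field_simps\<close>)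

lemma SS_J: "SS (sb (lin 0 1) (lin (-1) 0) c) = sb (lin (-t) 0) (lin 0 t) (SS c)"
  unfolding SS_def sb_comp_lin
  by (rule sb_lin_eq) (use h in \<open>simp_all add: field_simps\<close>)

lemma SS_Z: "SS (sb (lin y 0) (lin 0 y) c) = sb (lin y 0) (lin 0 y) (SS c)"
  unfolding SS_def sb_comp_lin
  by (rule sb_lin_eq) (simp_all add: field_simps)

lemma SI_G: "SI (sb (lin (-t) 0) (lin 0 t) c) = sb (lin 0 1) (lin (-1) 0) (SI c)"
  unfolding SI_def sb_comp_lin
  by (rule sb_lin_eq) (use h in \<open>simp_all add: field_simps\<close>)

lemma SI_Z: "SI (sb (lin y 0) (lin 0 y) c) = sb (lin y 0) (lin 0 y) (SI c)"
  unfolding SI_def sb_comp_lin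
  by (rule sb_lin_eq) (simp_all add: field_simps)

end

theorem mainTheorem16:
  fixes k :: nat and w z :: "'k::{alg_closed_field, field_char_0}"
  assumes "odd k"
    and "primitive_root w (2 * 2 * k)"
    and "primitive_root z (4 * k)"
  shows "qalg_iso (-1) (invariants (-1) (G_nk 2 k w))
                  1 (invariants 1 (cyclic_grp (4 * k) (2 * k + 1) z))"
proof -
  have k: "odd k" by fact
  have w: "primitive_root w (4*k)" using assms(2) by simp
  have zp: "primitive_root z (4*k)" by fact
  have z2k: "z^(2*k) = -1" using prim_half[of z "2*k"] zp by (simp add: mult.assoc)
  have hz: "\<And>n. z^n = 1 \<longleftrightarrow> 4*k dvd n" using prim_pow_eq_1[OF zp] by blast
  have hz2: "(z^2)^n = 1 \<longleftrightarrow> 2*k dvd n" for n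
  proof -
    have "(z^2)^n = z^(2*n)" by (simp add: power_mult)
    then have "(z^2)^n = 1 \<longleftrightarrow> 2*(2*k) dvd 2*n" using hz[of "2*n"] by simp
    then show ?thesis using nat_mult_dvd_cancel1[of 2 "2*k" n] by simp
  qed
  define t where "t = -(z^k)"
  have h: "t * t = -1" unfolding t_def using z2k by (simp add: power_mult[symmetric] power2_eq_square[symmetric] mult.commute)
  have h': "(-t) * (-t) = -1" using h by simp
  let ?A = "invariants (-1) (G_nk 2 k w)"
  let ?B = "invariants 1 (cyclic_grp (4 * k) (2 * k + 1) z)"
  have A: "p \<in> ?A \<longleftrightarrow> condA k p" for p using invA[OF k w] .
  have B: "q \<in> ?B \<longleftrightarrow> condB k z q" for q using invB[of q k z] by simp
  let ?J = "sb (lin 0 1) (lin (-1) 0) :: 'k qpoly \<Rightarrow> 'k qpoly"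
  let ?Z = "sb (lin (z^2) 0) (lin 0 (z^2)) :: 'k qpoly \<Rightarrow> 'k qpoly"
  let ?G = "sb (lin (-t) 0) (lin 0 t) :: 'k qpoly \<Rightarrow> 'k qpoly"
  have CB: "condB k z q \<longleftrightarrow> ?G q = q \<and> ?Z q = q" for q
    using condB_fix[OF k z2k hz, of q] unfolding t_def by simp
  have CC: "condC k c \<longleftrightarrow> ?J c = c \<and> ?Z c = c" for c
    using condC_fix[of "z^2" k c] hz2 by blast
  define f where "f p = SS t (Tm t p)" for p
  define g where "g q = Tm (-t) (SI t q)" for q
  have fg: "f (g q) = q" for q
    unfolding f_def g_def using Tm_inv[OF h', of "SI t q"] SS_SI[OF h] by simp
  have gf: "g (f p) = p" for p
    unfolding f_def g_def using Tm_inv[OF h, of p] SI_SS[OF h] by simp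
  have fAB: "f p \<in> ?B" if "p \<in> ?A" for p
  proof -
    have "condC k (Tm t p)" using condA_condC[OF h] that A by blast
    then have c: "?J (Tm t p) = Tm t p" "?Z (Tm t p) = Tm t p" using CC by blast+
    have "?G (f p) = f p" unfolding f_def using SS_J[OF h, of "Tm t p"] c(1) by simp
    moreover have "?Z (f p) = f p" unfolding f_def using SS_Z[OF h, of "z^2" "Tm t p"] c(2) by simp
    ultimately show ?thesis using B CB by blast
  qed
  have gBA: "g q \<in> ?A" if "q \<in> ?B" for q
  proof -
    have q: "?G q = q" "?Z q = q" using that B CB by blast+
    have "?J (SI t q) = SI t q" using SI_G[OF h, of q] q(1) by simp
    moreover have "?Z (SI t q) = SI t q" using SI_Z[OF h, of "z^2" q] q(2) by simp
    ultimately have "condC k (SI t q)" using CC by blast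
    then have "condA k (Tm (-t) (SI t q))" using condC_condA[OF h'] by blast
    then show ?thesis unfolding g_def using A by blast
  qed
  have bij: "bij_betw f ?A ?B"
    by (rule bij_betw_byWitness[where f'=g]) (use fg gf fAB gBA in auto)
  have one: "f qone = qone" unfolding f_def qone_one Tm_one SS_def[OF h] sb_one by (rule refl)
  have add: "f (x + y) = f x + f y" for x y unfolding f_def SS_def[OF h] by (simp add: Tm_add sb_add)
  have mult: "f (qmult (-1) x y) = qmult 1 (f x) (f y)" if "y \<in> ?A" for x y
  proof -
    have ev: "even (fst a + snd a)" if "a \<in> Poly_Mapping.keys y" for a
    proof -
      have "Poly_Mapping.lookup y (fst a, snd a) \<noteq> 0" using that by (simp add: in_keys_iff)
      then have "2*k dvd fst a + snd a" using \<open>y \<in> ?A\<close> A unfolding condA_def by blast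
      then show ?thesis by (meson dvd_trans dvd_triv_left)
    qed
    have "Tm t (qmult (-1) x y) = Tm t x * Tm t y" by (rule Tm_mult[OF h]) (rule ev)
    then show ?thesis unfolding f_def qmult_1 SS_def[OF h] by (simp add: sb_mult)
  qed
  have scale: "f (qscale c x) = qscale c (f x)" for c x
    unfolding f_def qscale_mult SS_def[OF h] by (simp add: Tm_scale sb_mult sb_const)
  show ?thesis unfolding qalg_iso_def
    using bij one add mult scale by blast
qed

end
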